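(* Let $0<\beta<4\pi/3$ and let $r_A,r_B,r_C>0$ with $r_A+r_B+r_C=1$. Then the free energy $\mathcal{F}$ is globally strictly convex on the convex set of admissible profiles with mean densities $r_A,r_B,r_C$.
   Context: Admissible profiles with mean densities $r_\alpha$: triples $(n_A,n_B,n_C)$ of nonnegative measurable functions on $[0,1]$ with $n_A+n_B+n_C=1$ and $\int_0^1n_\alpha(x)\,dx=r_\alpha$. Free energy: $\mathcal{F}(\{n\})=\beta\int_0^1dx\int_x^1dz\,[n_A(x)n_C(z)+n_B(x)n_A(z)+n_C(x)n_B(z)]+\int_0^1\sum_{\alpha=A,B,C}n_\alpha(x)\ln n_\alpha(x)\,dx$. *)

theory Defs
  imports "HOL-Analysis.Analysis"
begin

definition admissible ::
  "real \<Rightarrow> real \<Rightarrow> real \<Rightarrow> (real \<Rightarrow> real) \<Rightarrow> (real \<Rightarrow> real) \<Rightarrow> (real \<Rightarrow> real) \<Rightarrow> bool" where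
  "admissible rA rB rC nA nB nC \<longleftrightarrow>
     set_borel_measurable lborel {0..1} nA \<and>
     set_borel_measurable lborel {0..1} nB \<and>
     set_borel_measurable lborel {0..1} nC \<and>
     (\<forall>x\<in>{0..1}. nA x \<ge> 0 \<and> nB x \<ge> 0 \<and> nC x \<ge> 0 \<and> nA x + nB x + nC x = 1) \<and>
     (LINT x:{0..1}|lborel. nA x) = rA \<and>
     (LINT x:{0..1}|lborel. nB x) = rB \<and>
     (LINT x:{0..1}|lborel. nC x) = rC"

text \<open>Free energy. Note that in Isabelle ln 0 = 0, so 0 * ln 0 = 0 as usual.\<close>
definition free_energy ::
  "real \<Rightarrow> (real \<Rightarrow> real) \<Rightarrow> (real \<Rightarrow> real) \<Rightarrow> (real \<Rightarrow> real) \<Rightarrow> real" where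
  "free_energy \<beta> nA nB nC =
     \<beta> * (LINT x:{0..1}|lborel. (LINT z:{x..1}|lborel.
            nA x * nC z + nB x * nA z + nC x * nB z))
     + (LINT x:{0..1}|lborel. nA x * ln (nA x) + nB x * ln (nB x) + nC x * ln (nC x))"

end

theory Submission
  imports Defs
begin



definition mf :: "real \<Rightarrow> real" where "mf s = ln s - 3/2 * ((s-1)*(s+5)/(s+2)^2)"
definition kf :: "real \<Rightarrow> real" where "kf s = s * ln s - s + 1 - 3*(s-1)^2/(2*(s+2))"

lemma m_deriv:
  assumes "x > 0"
  shows "(mf has_real_derivative (1/x - 27/(x+2)^3)) (at x)"
  unfolding mf_def using assms
  apply (auto intro!: derivative_eq_intros)
  apply (simp add: divide_simps)
  apply algebra
  done

lemma k_deriv: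
  assumes "x > 0"
  shows "(kf has_real_derivative mf x) (at x)"
  unfolding kf_def mf_def using assms
  apply (auto intro!: derivative_eq_intros)
  apply (simp add: divide_simps)
  apply algebra
  done

lemma m_deriv_nonneg: assumes "(x::real) > 0" shows "1/x - 27/(x+2)^3 \<ge> 0"
proof -
  have "27 * x \<le> (x+2)^3" using assms
  proof -
    have "(x+2)^3 - 27*x = (x-1)^2 * (x+8)" by algebra
    moreover have "(x-1)^2 * (x+8) \<ge> 0" using assms by simp
    ultimately show ?thesis by simp
  qed
  then show ?thesis using assms by (simp add: divide_simps)
qed

lemma mf_cont: "0 < a \<Longrightarrow> continuous_on {a..b} mf"
  unfolding mf_def by (intro continuous_intros) (auto simp: add_pos_pos)

lemma kf_cont: "0 < a \<Longrightarrow> continuous_on {a..b} kf"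
  unfolding kf_def by (intro continuous_intros) auto

lemma mf1: "mf 1 = 0" by (simp add: mf_def)
lemma kf1: "kf 1 = 0" by (simp add: kf_def)

lemma mf_le: assumes "0 < s" "s \<le> 1" shows "mf s \<le> 0"
proof -
  have "mf s \<le> mf 1"
  proof (rule DERIV_nonneg_imp_increasing_open[OF assms(2)])
    fix x assume "s < x" "x < 1"
    then show "\<exists>y. (mf has_real_derivative y) (at x) \<and> 0 \<le> y"
      using m_deriv m_deriv_nonneg assms by (meson less_trans)
  qed (use mf_cont assms in auto)
  then show ?thesis by (simp add: mf1)
qed

lemma mf_ge: assumes "1 \<le> s" shows "mf s \<ge> 0"
proof -
  have "mf 1 \<le> mf s"
  proof (rule DERIV_nonneg_imp_increasing_open[OF assms(1)])
    fix x assume "1 < x" "x < s"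
    then show "\<exists>y. (mf has_real_derivative y) (at x) \<and> 0 \<le> y"
      using m_deriv m_deriv_nonneg by (meson less_trans zero_less_one)
  qed (use mf_cont in auto)
  then show ?thesis by (simp add: mf1)
qed

lemma kf_nonneg: assumes "0 \<le> s" shows "kf s \<ge> 0"
proof (cases "s = 0")
  case True then show ?thesis by (simp add: kf_def)
next
  case False
  then have s0: "s > 0" using assms by simp
  show ?thesis
  proof (cases "s \<le> 1")
    case True
    have "kf s \<ge> kf 1"
    proof (rule DERIV_nonpos_imp_decreasing_open[OF True])
      fix x assume "s < x" "x < 1"
      then show "\<exists>y. (kf has_real_derivative y) (at x) \<and> y \<le> 0"
        using k_deriv mf_le s0 by (meson less_trans less_imp_le)
    qed (use kf_cont s0 in auto)
    then show ?thesis by (simp add: kf1)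
  next
    case False
    have "kf 1 \<le> kf s"
    proof (rule DERIV_nonneg_imp_increasing_open[of 1 s])
      fix x assume "1 < x" "x < s"
      then show "\<exists>y. (kf has_real_derivative y) (at x) \<and> 0 \<le> y"
        using k_deriv mf_ge by (meson less_trans less_imp_le zero_less_one)
    qed (use kf_cont False in auto)
    then show ?thesis by (simp add: kf1)
  qed
qed

lemma pins1:
  assumes x: "(x::real) \<ge> 0" and y: "y > 0"
  shows "3*(x-y)^2/(2*(x+2*y)) \<le> x*ln x - x*ln y - x + y"
proof -
  have k: "kf (x/y) \<ge> 0" using x y by (intro kf_nonneg) simp
  have e1: "x*ln x - x*ln y = y * ((x/y) * ln (x/y))"
  proof (cases "x = 0")
    case False then have "x > 0" using x by simp
    then show ?thesis using y by (simp add: ln_div algebra_simps)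
  qed simp
  have e2: "3*(x-y)^2/(2*(x+2*y)) = y * (3*(x/y-1)^2/(2*(x/y+2)))"
  proof -
    define sv where "sv = x/y"
    have xs: "x = sv*y" using y unfolding sv_def by simp
    have s0: "sv \<ge> 0" using x y unfolding sv_def by simp
    then have "sv + 2 \<noteq> 0" by simp
    moreover have "2*(sv*y)+4*y > 0" using y s0 by (smt (verit) mult_nonneg_nonneg)
    moreover have "(sv*y - y)^2 * (2 * sv + 4) = y * ((sv-1)^2 * (2 * (sv*y) + 4*y))" by algebra
    ultimately show ?thesis unfolding xs using y
      by (simp add: divide_simps)
  qed
  have "y * (3*(x/y-1)^2/(2*(x/y+2))) \<le> y * ((x/y) * ln (x/y) - x/y + 1)"
    using k y unfolding kf_def by (intro mult_left_mono) auto
  also have "\<dots> = y * ((x/y) * ln (x/y)) - x + y" using y by (simp add: algebra_simps)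
  finally show ?thesis using e1 e2 by simp
qed

lemma jensen_inv:
  assumes A: "(A::real) > 0" and B: "B > 0" and t: "0 \<le> t" "t \<le> 1"
  shows "1/((1-t)*A + t*B) \<le> (1-t)/A + t/B"
proof -
  have pos: "(1-t)*A + t*B > 0"
  proof (cases "t = 1")
    case True then show ?thesis using B by simp
  next
    case False then have "(1-t)*A > 0" using A t by simp
    moreover have "t*B \<ge> 0" using B t by simp
    ultimately show ?thesis by simp
  qed
  have "((1-t)/A + t/B) * ((1-t)*A + t*B) - 1 = t*(1-t)*(A-B)^2/(A*B)"
    using A B by (simp add: field_simps) algebra
  also have "\<dots> \<ge> 0" using A B t by simp
  finally have "((1-t)/A + t/B) * ((1-t)*A + t*B) \<ge> 1" by simp
  then show ?thesis using pos by (simp add: divide_simps mult.commute)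
qed

definition phi :: "real \<Rightarrow> real" where "phi x = x * ln x"

lemma defect1:
  assumes p: "(p::real) \<ge> 0" and q: "q \<ge> 0" and t: "0 < t" "t < 1"
  shows "3/2*t*(1-t)*(p-q)^2 / ((1-t)*p + t*q + 2*(t*p+(1-t)*q))
         \<le> t*phi p + (1-t)*phi q - phi (t*p+(1-t)*q)"
proof (cases "t*p+(1-t)*q = 0")
  case True
  then have "p = 0" "q = 0" using p q t
    by (smt (verit, ccfv_SIG) mult_nonneg_nonneg mult_pos_pos)+
  then show ?thesis by (simp add: phi_def)
next
  case False
  define r where "r = t*p+(1-t)*q"
  have r: "r > 0" using False p q t unfolding r_def
    by (smt (verit, ccfv_SIG) mult_nonneg_nonneg)
  have A: "p + 2*r > 0" "q + 2*r > 0" using r p q by auto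
  have d: "t*phi p + (1-t)*phi q - phi r =
       t*(p*ln p - p*ln r - p + r) + (1-t)*(q*ln q - q*ln r - q + r)"
    unfolding phi_def r_def by (simp add: algebra_simps)
  have b1: "3*(p-r)^2/(2*(p+2*r)) \<le> p*ln p - p*ln r - p + r" by (rule pins1[OF p r])
  have b2: "3*(q-r)^2/(2*(q+2*r)) \<le> q*ln q - q*ln r - q + r" by (rule pins1[OF q r])
  have L1: "t*(3*(p-r)^2/(2*(p+2*r))) + (1-t)*(3*(q-r)^2/(2*(q+2*r))) \<le> t*phi p + (1-t)*phi q - phi r"
    unfolding d using b1 b2 t by (intro add_mono mult_left_mono) auto
  have L2: "t*(3*(p-r)^2/(2*(p+2*r))) + (1-t)*(3*(q-r)^2/(2*(q+2*r)))
      = 3/2*t*(1-t)*(p-q)^2 * ((1-t)/(p+2*r) + t/(q+2*r))"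
  proof -
    have pr: "p - r = (1-t)*(p-q)" "q - r = -t*(p-q)" unfolding r_def by algebra+
    have "p+2*r \<noteq> 0" "q+2*r \<noteq> 0" using A by auto
    then show ?thesis unfolding pr by (simp add: divide_simps) algebra
  qed
  have L3: "3/2*t*(1-t)*(p-q)^2 * (1/((1-t)*(p+2*r) + t*(q+2*r)))
      \<le> 3/2*t*(1-t)*(p-q)^2 * ((1-t)/(p+2*r) + t/(q+2*r))"
    using jensen_inv[OF A, of t] t by (intro mult_left_mono) auto
  have L4: "(1-t)*p + t*q + 2*(t*p+(1-t)*q) = (1-t)*(p+2*r) + t*(q+2*r)" unfolding r_def by algebra
  have "3/2*t*(1-t)*(p-q)^2 / ((1-t)*p + t*q + 2*(t*p+(1-t)*q))
       = 3/2*t*(1-t)*(p-q)^2 * (1/((1-t)*(p+2*r) + t*(q+2*r)))" unfolding L4 by simp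
  also have "\<dots> \<le> t*phi p + (1-t)*phi q - phi r" using L1 L2 L3 by linarith
  finally show ?thesis unfolding r_def .
qed

lemma cs3:
  assumes "(y1::real) \<ge> 0" "y2 \<ge> 0" "y3 \<ge> 0"
  shows "(c1*y1+c2*y2+c3*y3)^2 \<le> (c1^2*y1+c2^2*y2+c3^2*y3)*(y1+y2+y3)"
proof -
  have "(c1^2*y1+c2^2*y2+c3^2*y3)*(y1+y2+y3) - (c1*y1+c2*y2+c3*y3)^2
      = y1*y2*(c1-c2)^2 + y1*y3*(c1-c3)^2 + y2*y3*(c2-c3)^2" by algebra
  moreover have "y1*y2*(c1-c2)^2 + y1*y3*(c1-c3)^2 + y2*y3*(c2-c3)^2 \<ge> 0"
    using assms by (intro add_nonneg_nonneg mult_nonneg_nonneg) auto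
  ultimately show ?thesis by simp
qed

lemma abs3: assumes "d1+d2+d3 = (0::real)"
  shows "2*(d1^2+d2^2+d3^2) \<le> (\<bar>d1\<bar>+\<bar>d2\<bar>+\<bar>d3\<bar>)^2"
proof -
  have d3: "d3 = -d1-d2" using assms by simp
  have e: "d1^2+d2^2+d3^2 = -2*(d1*d2+d1*d3+d2*d3)" unfolding d3 by algebra
  have f: "(\<bar>d1\<bar>+\<bar>d2\<bar>+\<bar>d3\<bar>)^2 = d1^2+d2^2+d3^2 + 2*(\<bar>d1*d2\<bar>+\<bar>d1*d3\<bar>+\<bar>d2*d3\<bar>)"
    by (simp add: power2_eq_square abs_mult algebra_simps)
  have "-(d1*d2) \<le> \<bar>d1*d2\<bar>" "-(d1*d3) \<le> \<bar>d1*d3\<bar>" "-(d2*d3) \<le> \<bar>d2*d3\<bar>" by auto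
  then show ?thesis unfolding f using e by (smt (verit))
qed

lemma frac_sum3:
  assumes s: "(y1::real) \<ge> 0" "y2 \<ge> 0" "y3 \<ge> 0" "y1+y2+y3 = 3"
    and z: "y1 = 0 \<Longrightarrow> d1 = 0" "y2 = 0 \<Longrightarrow> d2 = 0" "y3 = 0 \<Longrightarrow> d3 = 0"
    and d: "d1+d2+d3 = (0::real)"
  shows "2/3*(d1^2+d2^2+d3^2) \<le> d1^2/y1+d2^2/y2+d3^2/y3"
proof -
  define c1 where "c1 = \<bar>d1\<bar>/y1"
  define c2 where "c2 = \<bar>d2\<bar>/y2"
  define c3 where "c3 = \<bar>d3\<bar>/y3"
  have e1: "\<bar>d1\<bar> = c1*y1" "d1^2/y1 = c1^2*y1" using z(1) unfolding c1_def
    by (cases "y1 = 0"; simp add: power2_eq_square field_simps)+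
  have e2: "\<bar>d2\<bar> = c2*y2" "d2^2/y2 = c2^2*y2" using z(2) unfolding c2_def
    by (cases "y2 = 0"; simp add: power2_eq_square field_simps)+
  have e3: "\<bar>d3\<bar> = c3*y3" "d3^2/y3 = c3^2*y3" using z(3) unfolding c3_def
    by (cases "y3 = 0"; simp add: power2_eq_square field_simps)+
  have "2*(d1^2+d2^2+d3^2) \<le> (\<bar>d1\<bar>+\<bar>d2\<bar>+\<bar>d3\<bar>)^2" by (rule abs3[OF d])
  also have "\<dots> = (c1*y1+c2*y2+c3*y3)^2" using e1 e2 e3 by simp
  also have "\<dots> \<le> (c1^2*y1+c2^2*y2+c3^2*y3)*(y1+y2+y3)" by (rule cs3) (use s in auto)
  also have "\<dots> = 3*(d1^2/y1+d2^2/y2+d3^2/y3)" using e1 e2 e3 s by simp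
  finally have "2*(d1^2+d2^2+d3^2) \<le> 3*(d1^2/y1+d2^2/y2+d3^2/y3)" .
  moreover have "\<And>X L. 2*X \<le> 3*L \<Longrightarrow> 2/3*X \<le> (L::real)" by linarith
  ultimately show ?thesis by blast
qed

lemma pointwise_defect:
  assumes p: "(p1::real) \<ge> 0" "p2 \<ge> 0" "p3 \<ge> 0" "p1+p2+p3 = 1"
    and q: "q1 \<ge> 0" "q2 \<ge> 0" "q3 \<ge> 0" "q1+q2+q3 = 1"
    and t: "0 < t" "t < 1"
  shows "t*(1-t)*((p1-q1)^2+(p2-q2)^2+(p3-q3)^2) \<le>
     (t*phi p1 + (1-t)*phi q1 - phi (t*p1+(1-t)*q1))
   + (t*phi p2 + (1-t)*phi q2 - phi (t*p2+(1-t)*q2))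
   + (t*phi p3 + (1-t)*phi q3 - phi (t*p3+(1-t)*q3))"
proof -
  define y1 where "y1 = (1-t)*p1 + t*q1 + 2*(t*p1+(1-t)*q1)"
  define y2 where "y2 = (1-t)*p2 + t*q2 + 2*(t*p2+(1-t)*q2)"
  define y3 where "y3 = (1-t)*p3 + t*q3 + 2*(t*p3+(1-t)*q3)"
  have sp: "y1 \<ge> 0" "y2 \<ge> 0" "y3 \<ge> 0" using p q t unfolding y1_def y2_def y3_def
    by (intro add_nonneg_nonneg mult_nonneg_nonneg; simp)+
  have ss: "y1+y2+y3 = 3" using p(4) q(4) unfolding y1_def y2_def y3_def by algebra
  have z1: "p1 - q1 = 0" if "y1 = 0"
  proof -
    have "(1-t)*p1 = 0" "t*q1 = 0" using that p q t unfolding y1_def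
      by (smt (verit) mult_nonneg_nonneg)+
    then show ?thesis using t by simp
  qed
  have z2: "p2 - q2 = 0" if "y2 = 0"
  proof -
    have "(1-t)*p2 = 0" "t*q2 = 0" using that p q t unfolding y2_def
      by (smt (verit) mult_nonneg_nonneg)+
    then show ?thesis using t by simp
  qed
  have z3: "p3 - q3 = 0" if "y3 = 0"
  proof -
    have "(1-t)*p3 = 0" "t*q3 = 0" using that p q t unfolding y3_def
      by (smt (verit) mult_nonneg_nonneg)+
    then show ?thesis using t by simp
  qed
  have dsum: "(p1-q1)+(p2-q2)+(p3-q3) = 0" using p(4) q(4) by (simp add: algebra_simps)
  have fs: "2/3*((p1-q1)^2+(p2-q2)^2+(p3-q3)^2) \<le> (p1-q1)^2/y1+(p2-q2)^2/y2+(p3-q3)^2/y3"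
    by (rule frac_sum3[OF sp ss z1 z2 z3 dsum])
  have D1: "3/2*t*(1-t)*(p1-q1)^2/y1 \<le> t*phi p1 + (1-t)*phi q1 - phi (t*p1+(1-t)*q1)"
    unfolding y1_def by (rule defect1) (use p q t in auto)
  have D2: "3/2*t*(1-t)*(p2-q2)^2/y2 \<le> t*phi p2 + (1-t)*phi q2 - phi (t*p2+(1-t)*q2)"
    unfolding y2_def by (rule defect1) (use p q t in auto)
  have D3: "3/2*t*(1-t)*(p3-q3)^2/y3 \<le> t*phi p3 + (1-t)*phi q3 - phi (t*p3+(1-t)*q3)"
    unfolding y3_def by (rule defect1) (use p q t in auto)
  have "t*(1-t)*((p1-q1)^2+(p2-q2)^2+(p3-q3)^2)
      = 3/2*t*(1-t)*(2/3*((p1-q1)^2+(p2-q2)^2+(p3-q3)^2))" by simp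
  also have "\<dots> \<le> 3/2*t*(1-t)*((p1-q1)^2/y1+(p2-q2)^2/y2+(p3-q3)^2/y3)"
    using fs t by (intro mult_left_mono) auto
  also have "\<dots> = 3/2*t*(1-t)*(p1-q1)^2/y1 + 3/2*t*(1-t)*(p2-q2)^2/y2 + 3/2*t*(1-t)*(p3-q3)^2/y3"
    by (simp only: distrib_left times_divide_eq_right)
  finally show ?thesis using D1 D2 D3 by linarith
qed




definition nice :: "(real \<Rightarrow> real) \<Rightarrow> bool" where
  "nice f \<longleftrightarrow> f \<in> borel_measurable borel \<and> (\<forall>x. x \<notin> {0..1} \<longrightarrow> f x = 0) \<and> (\<exists>C. \<forall>x. \<bar>f x\<bar> \<le> C)"

lemma niceD:
  assumes "nice f"
  shows "f \<in> borel_measurable borel" "\<And>x. x \<notin> {0..1} \<Longrightarrow> f x = 0" "\<exists>C. \<forall>x. \<bar>f x\<bar> \<le> C"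
  using assms unfolding nice_def by auto

lemma nice_meas[measurable]: "nice f \<Longrightarrow> f \<in> borel_measurable lborel"
  using niceD(1) by simp

lemma nice_bound: assumes "nice f" obtains C where "C \<ge> 0" "\<And>x. \<bar>f x\<bar> \<le> C"
proof -
  obtain C where "\<forall>x. \<bar>f x\<bar> \<le> C" using niceD(3)[OF assms] by blast
  then show ?thesis using that[of C] by (meson abs_ge_zero order_trans)
qed

lemma nice_integrable: assumes "nice f" shows "integrable lborel f"
proof -
  obtain C where C: "C \<ge> 0" "\<And>x. \<bar>f x\<bar> \<le> C" using nice_bound[OF assms] by blast
  have i: "integrable lborel (\<lambda>x. indicator {0..1} (x::real) * C)"
    by (simp add: integrable_indicator_iff emeasure_lborel_Icc_eq ennreal_less_top)
  show ?thesis
  proof (rule Bochner_Integration.integrable_bound[OF i])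
    show "f \<in> borel_measurable lborel" using assms by measurable
    show "AE x in lborel. norm (f x) \<le> norm (indicator {0..1} x * C)"
      using C niceD(2)[OF assms] by (auto split: split_indicator)
  qed
qed

lemma nice_set_integrable: "nice f \<Longrightarrow> S \<in> sets lborel \<Longrightarrow> set_integrable lborel S f"
  unfolding set_integrable_def using nice_integrable integrable_mult_indicator by blast

lemma nice_add: "nice f \<Longrightarrow> nice g \<Longrightarrow> nice (\<lambda>x. f x + g x)"
  unfolding nice_def by (auto intro!: exI[where x="_+_"] abs_triangle_ineq[THEN order_trans] add_mono)

lemma nice_diff: "nice f \<Longrightarrow> nice g \<Longrightarrow> nice (\<lambda>x. f x - g x)"
  unfolding nice_def by (auto intro!: exI[where x="_+_"] abs_triangle_ineq4[THEN order_trans] add_mono)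

lemma nice_cmult: "nice f \<Longrightarrow> nice (\<lambda>x. c * f x)"
  unfolding nice_def by (auto intro!: exI[where x="\<bar>c\<bar>*_"] mult_left_mono simp: abs_mult)

lemma nice_mult_bounded:
  assumes "nice f" "g \<in> borel_measurable borel" "\<And>x. \<bar>g x\<bar> \<le> D"
  shows "nice (\<lambda>x. f x * g x)"
proof -
  obtain C where C: "C \<ge> 0" "\<And>x. \<bar>f x\<bar> \<le> C" using nice_bound[OF assms(1)] by blast
  have "\<bar>f x * g x\<bar> \<le> C * D" for x
    unfolding abs_mult using C assms(3) by (intro mult_mono) auto
  then show ?thesis using assms niceD[OF assms(1)] unfolding nice_def by auto
qed

lemma nice_mult: "nice f \<Longrightarrow> nice g \<Longrightarrow> nice (\<lambda>x. f x * g x)"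
  by (metis nice_bound nice_def nice_mult_bounded)

definition G :: "(real \<Rightarrow> real) \<Rightarrow> real \<Rightarrow> real" where
  "G g x = (LINT z:{x..}|lborel. g z)"

lemma int_bound:
  assumes "nice g" "\<And>x. \<bar>g x\<bar> \<le> C" "S \<in> sets lborel" "emeasure lborel S < \<infinity>"
  shows "\<bar>LINT z:S|lborel. g z\<bar> \<le> C * measure lborel S"
proof -
  have "\<bar>LINT z:S|lborel. g z\<bar> \<le> (LINT z:S|lborel. \<bar>g z\<bar>)"
    using set_integral_norm_bound[OF nice_set_integrable[OF assms(1,3)]] by simp
  also have "\<dots> \<le> (LINT z:S|lborel. C)"
  proof (rule set_integral_mono)
    show "set_integrable lborel S (\<lambda>z. \<bar>g z\<bar>)"
      using nice_set_integrable[OF assms(1,3)] set_integrable_abs by blast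
    show "set_integrable lborel S (\<lambda>z. C)"
      using assms(3,4) by (simp add: set_integrable_def integrable_indicator_iff)
  qed (use assms(2) in auto)
  also have "\<dots> = C * measure lborel S"
    using assms(3,4) by (simp add: set_integral_const)
  finally show ?thesis .
qed

lemma G_diff:
  assumes "nice g" "x \<le> y"
  shows "G g x = (LINT z:{x..<y}|lborel. g z) + G g y"
proof -
  have e: "{x..} = {x..<y} \<union> {y..}" using assms(2) by auto
  have d: "{x..<y} \<inter> {y..} = {}" by auto
  show ?thesis unfolding G_def e
    by (rule set_integral_Un[OF d]) (auto intro: nice_set_integrable[OF assms(1)])
qed

lemma G_lip:
  assumes "nice g" "\<And>x. \<bar>g x\<bar> \<le> C" "C \<ge> 0"
  shows "\<bar>G g x - G g y\<bar> \<le> C * \<bar>x - y\<bar>"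
proof -
  have *: "\<bar>G g a - G g b\<bar> \<le> C * \<bar>a - b\<bar>" if "a \<le> b" for a b
  proof -
    have "\<bar>G g a - G g b\<bar> = \<bar>LINT z:{a..<b}|lborel. g z\<bar>" using G_diff[OF assms(1) that] by simp
    also have "\<dots> \<le> C * measure lborel {a..<b}"
      by (rule int_bound[OF assms(1,2)]) (use that in \<open>auto simp: ennreal_less_top\<close>)
    also have "\<dots> = C * \<bar>a - b\<bar>" using that by (simp add: measure_def)
    finally show ?thesis .
  qed
  show ?thesis
    by (cases "x \<le> y") (use *[of x y] *[of y x] in \<open>auto simp: abs_minus_commute\<close>)
qed

lemma G_cont:
  assumes "nice g"
  shows "continuous_on UNIV (G g)"
proof -
  obtain C where C: "C \<ge> 0" "\<And>x. \<bar>g x\<bar> \<le> C" using nice_bound[OF assms] by blast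
  have "C-lipschitz_on UNIV (G g)"
    unfolding lipschitz_on_def dist_real_def using G_lip[OF assms C(2,1)] C(1) by auto
  then show ?thesis by (rule lipschitz_on_continuous_on)
qed

lemma G_meas[measurable]: "nice g \<Longrightarrow> G g \<in> borel_measurable borel"
  using G_cont borel_measurable_continuous_onI by blast

lemma G_bound:
  assumes "nice g" "\<And>x. \<bar>g x\<bar> \<le> C"
  shows "\<bar>G g x\<bar> \<le> C"
proof -
  have C: "C \<ge> 0" using assms(2)[of 0] by linarith
  have "\<bar>G g x\<bar> = \<bar>\<integral>z. indicator {x..} z * g z \<partial>lborel\<bar>"
    unfolding G_def set_lebesgue_integral_def by simp
  also have "\<dots> \<le> (\<integral>z. indicator {0..1} (z::real) * C \<partial>lborel)"
  proof (rule integral_abs_bound_integral)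
    show "integrable lborel (\<lambda>z. indicator {x..} z * g z)"
      using nice_set_integrable[OF assms(1), of "{x..}"] unfolding set_integrable_def by simp
    show "integrable lborel (\<lambda>z. indicator {0..1} (z::real) * C)"
      by (simp add: integrable_indicator_iff emeasure_lborel_Icc_eq ennreal_less_top)
    fix z show "\<bar>indicator {x..} z * g z\<bar> \<le> indicator {0..1} z * C"
      using assms(2)[of z] niceD(2)[OF assms(1), of z] C by (auto split: split_indicator)
  qed
  also have "\<dots> = C" by simp
  finally show ?thesis by simp
qed

definition I :: "(real \<Rightarrow> real) \<Rightarrow> real" where
  "I f = (LINT x:{0..1}|lborel. f x)"

definition J :: "(real \<Rightarrow> real) \<Rightarrow> (real \<Rightarrow> real) \<Rightarrow> real" where
  "J f g = (LINT x:{0..1}|lborel. f x * G g x)"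

lemma nice_setint_eq:
  assumes "nice h" shows "(LINT x:{0..1}|lborel. h x) = integral\<^sup>L lborel h"
  unfolding set_lebesgue_integral_def
  by (rule Bochner_Integration.integral_cong) (use niceD(2)[OF assms] in \<open>auto split: split_indicator\<close>)

lemma nice_GG: "nice f \<Longrightarrow> nice g \<Longrightarrow> nice (\<lambda>x. f x * G g x)"
  using nice_mult_bounded G_meas nice_bound G_bound by metis

lemma fubini_step:
  assumes f: "nice f" and g: "nice g"
  shows "(\<integral>x. (\<integral>z. (if x \<le> z then g x * f z else 0) \<partial>lborel) \<partial>lborel)
       = (\<integral>z. (\<integral>x. (if x \<le> z then g x * f z else 0) \<partial>lborel) \<partial>lborel)"
proof -
  obtain Cf where Cf: "Cf \<ge> 0" "\<And>x. \<bar>f x\<bar> \<le> Cf" using nice_bound[OF f] by blast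
  obtain Cg where Cg: "Cg \<ge> 0" "\<And>x. \<bar>g x\<bar> \<le> Cg" using nice_bound[OF g] by blast
  have [measurable]: "f \<in> borel_measurable lborel" "g \<in> borel_measurable lborel" using f g by measurable
  let ?H = "\<lambda>p. indicator ({0..1::real} \<times> {0..1::real}) p * (Cg * Cf)"
  have "emeasure (lborel \<Otimes>\<^sub>M lborel) ({0..1::real} \<times> {0..1::real}) = emeasure lborel {0..1::real} * emeasure lborel {0..1::real}"
    by (rule sigma_finite_measure.emeasure_pair_measure_Times[OF sigma_finite_lborel]) auto
  then have "emeasure (lborel \<Otimes>\<^sub>M lborel) ({0..1::real} \<times> {0..1::real}) < \<infinity>"
    by (simp add: ennreal_less_top)
  then have iH: "integrable (lborel \<Otimes>\<^sub>M lborel) ?H"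
    by (intro integrable_mult_left) (simp add: integrable_indicator_iff)
  have int: "integrable (lborel \<Otimes>\<^sub>M lborel) (\<lambda>(x,z). if x \<le> z then g x * f z else 0)"
  proof (rule Bochner_Integration.integrable_bound[OF iH])
    show "(\<lambda>(x,z). if x \<le> z then g x * f z else 0) \<in> borel_measurable (lborel \<Otimes>\<^sub>M lborel)"
      by measurable
    show "AE p in lborel \<Otimes>\<^sub>M lborel. norm ((\<lambda>(x,z). if x \<le> z then g x * f z else 0) p) \<le> norm (?H p)"
    proof (rule AE_I2)
      fix p :: "real \<times> real"
      obtain x z where p: "p = (x,z)" by (cases p)
      have "\<bar>g x * f z\<bar> \<le> Cg * Cf" unfolding abs_mult using Cf Cg by (intro mult_mono) auto
      moreover have "g x * f z = 0" if "p \<notin> {0..1} \<times> {0..1}"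
        using that niceD(2)[OF f] niceD(2)[OF g] unfolding p by auto
      ultimately show "norm ((\<lambda>(x,z). if x \<le> z then g x * f z else 0) p) \<le> norm (?H p)"
        unfolding p using Cf Cg by (auto split: split_indicator)
    qed
  qed
  show ?thesis
    using lborel_pair.Fubini_integral[OF int] by simp
qed

lemma nice_int_eq_I: "nice h \<Longrightarrow> integral\<^sup>L lborel h = I h"
  unfolding I_def by (simp add: nice_setint_eq)

lemma G_alt: "G f x = (\<integral>z. indicator {x..} z * f z \<partial>lborel)"
  unfolding G_def set_lebesgue_integral_def by simp

lemma lower_int:
  assumes g: "nice g"
  shows "(\<integral>x. indicator {..z} x * g x \<partial>lborel) = I g - G g z"
proof -
  have ig: "integrable lborel g" by (rule nice_integrable[OF g])
  have i2: "integrable lborel (\<lambda>x. indicator {z<..} x * g x)"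
    using nice_set_integrable[OF g, of "{z<..}"] unfolding set_integrable_def by simp
  have "(\<integral>x. indicator {..z} x * g x \<partial>lborel) = (\<integral>x. g x - indicator {z<..} x * g x \<partial>lborel)"
    by (rule Bochner_Integration.integral_cong) (auto split: split_indicator)
  also have "\<dots> = integral\<^sup>L lborel g - (\<integral>x. indicator {z<..} x * g x \<partial>lborel)"
    by (rule Bochner_Integration.integral_diff[OF ig i2])
  also have "(\<integral>x. indicator {z<..} x * g x \<partial>lborel) = G g z"
    unfolding G_alt
  proof (rule integral_cong_AE)
    show "AE x in lborel. indicator {z<..} x * g x = indicator {z..} x * g x"
      using AE_lborel_singleton[of z] by eventually_elim (auto split: split_indicator)
  next
    show "(\<lambda>x. indicator {z<..} x * g x) \<in> borel_measurable lborel" using g by measurable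
    show "(\<lambda>x. indicator {z..} x * g x) \<in> borel_measurable lborel" using g by measurable
  qed
  finally show ?thesis using nice_int_eq_I[OF g] by simp
qed

lemma ibp:
  assumes f: "nice f" and g: "nice g"
  shows "J g f + J f g = I f * I g"
proof -
  have "J g f = (\<integral>x. g x * G f x \<partial>lborel)"
    unfolding J_def by (rule nice_setint_eq[OF nice_GG[OF g f]])
  also have "\<dots> = (\<integral>x. (\<integral>z. (if x \<le> z then g x * f z else 0) \<partial>lborel) \<partial>lborel)"
  proof (rule Bochner_Integration.integral_cong[OF refl])
    fix x
    have "g x * G f x = (\<integral>z. g x * (indicator {x..} z * f z) \<partial>lborel)"
      unfolding G_alt by (rule integral_mult_right_zero[symmetric])
    also have "\<dots> = (\<integral>z. (if x \<le> z then g x * f z else 0) \<partial>lborel)"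
      by (rule Bochner_Integration.integral_cong) (auto split: split_indicator)
    finally show "g x * G f x = (\<integral>z. (if x \<le> z then g x * f z else 0) \<partial>lborel)" .
  qed
  also have "\<dots> = (\<integral>z. (\<integral>x. (if x \<le> z then g x * f z else 0) \<partial>lborel) \<partial>lborel)"
    by (rule fubini_step[OF f g])
  also have "\<dots> = (\<integral>z. I g * f z - f z * G g z \<partial>lborel)"
  proof (rule Bochner_Integration.integral_cong[OF refl])
    fix z
    have "(\<integral>x. (if x \<le> z then g x * f z else 0) \<partial>lborel) = (\<integral>x. f z * (indicator {..z} x * g x) \<partial>lborel)"
      by (rule Bochner_Integration.integral_cong) (auto split: split_indicator)
    also have "\<dots> = f z * (I g - G g z)" by (simp only: integral_mult_right_zero lower_int[OF g])
    finally show "(\<integral>x. (if x \<le> z then g x * f z else 0) \<partial>lborel) = I g * f z - f z * G g z"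
      by (simp add: algebra_simps)
  qed
  also have "\<dots> = (\<integral>z. I g * f z \<partial>lborel) - (\<integral>z. f z * G g z \<partial>lborel)"
    by (rule Bochner_Integration.integral_diff)
       (use nice_integrable[OF f] nice_integrable[OF nice_GG[OF f g]] in auto)
  also have "(\<integral>z. I g * f z \<partial>lborel) = I g * integral\<^sup>L lborel f"
    by (rule integral_mult_right_zero)
  also have "(\<integral>z. f z * G g z \<partial>lborel) = J f g"
    unfolding J_def by (rule nice_setint_eq[OF nice_GG[OF f g], symmetric])
  finally show ?thesis using nice_int_eq_I[OF f] by simp
qed

lemma setint_nonneg:
  fixes f :: "real \<Rightarrow> real"
  assumes "\<And>x. x \<in> S \<Longrightarrow> 0 \<le> f x"
  shows "0 \<le> (LINT x:S|lborel. f x)"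
  unfolding set_lebesgue_integral_def
  by (rule Bochner_Integration.integral_nonneg) (use assms in \<open>auto split: split_indicator\<close>)

lemma discr:
  fixes A B C :: real
  assumes "\<And>l. 0 \<le> A - 2*l*B + l^2*C" "C \<ge> 0"
  shows "B^2 \<le> A*C"
proof (cases "C = 0")
  case True
  show ?thesis
  proof (rule ccontr)
    assume "\<not> ?thesis"
    then have "B \<noteq> 0" using True by simp
    then have "A - 2*((A+1)/(2*B))*B + ((A+1)/(2*B))^2*C = -1" using True by (simp add: field_simps)
    then show False using assms(1)[of "(A+1)/(2*B)"] by simp
  qed
next
  case False
  then have C: "C > 0" using assms(2) by simp
  have "0 \<le> A - 2*(B/C)*B + (B/C)^2*C" by (rule assms(1))
  also have "\<dots> = (A*C - B^2)/C" using C by (simp add: field_simps power2_eq_square)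
  finally show ?thesis using C by (simp add: divide_simps)
qed

lemma CS_nice:
  assumes f: "nice f" and g: "nice g" and S: "S \<in> sets lborel"
  shows "(LINT x:S|lborel. f x * g x)^2 \<le> (LINT x:S|lborel. (f x)^2) * (LINT x:S|lborel. (g x)^2)"
proof (rule discr)
  have nf2: "nice (\<lambda>x. (f x)^2)" "nice (\<lambda>x. (g x)^2)" "nice (\<lambda>x. f x * g x)"
    using nice_mult[OF f f] nice_mult[OF g g] nice_mult[OF f g] by (simp_all add: power2_eq_square)
  note si = nice_set_integrable[OF _ S]
  fix l :: real
  have "0 \<le> (LINT x:S|lborel. (f x - l * g x)^2)" by (rule setint_nonneg) simp
  also have "(LINT x:S|lborel. (f x - l * g x)^2)
     = (LINT x:S|lborel. (f x)^2 - 2*l*(f x * g x) + l^2*(g x)^2)"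
    by (rule set_lebesgue_integral_cong) (use S in \<open>auto simp: power2_eq_square algebra_simps\<close>)
  also have "\<dots> = (LINT x:S|lborel. (f x)^2) - 2*l*(LINT x:S|lborel. f x * g x) + l^2*(LINT x:S|lborel. (g x)^2)"
    using si[OF nf2(1)] si[OF nf2(2)] si[OF nf2(3)] S by simp
  finally show "0 \<le> (LINT x:S|lborel. (f x)^2) - 2*l*(LINT x:S|lborel. f x * g x) + l^2*(LINT x:S|lborel. (g x)^2)" .
next
  show "0 \<le> (LINT x:S|lborel. (g x)^2)" by (rule setint_nonneg) simp
qed

lemma CS_interval:
  assumes f: "nice f" and ab: "a \<le> b"
  shows "(LINT x:{a..b}|lborel. f x)^2 \<le> (b - a) * (LINT x:{a..b}|lborel. (f x)^2)"
proof -
  have nf2: "nice (\<lambda>x. (f x)^2)" using nice_mult[OF f f] by (simp add: power2_eq_square)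
  have ic: "set_integrable lborel {a..b} (\<lambda>x. c)" for c :: real
    by (simp add: set_integrable_def integrable_indicator_iff emeasure_lborel_Icc_eq ennreal_less_top)
  have m: "(LINT x:{a..b}|lborel. (c::real)) = c * (b - a)" for c
    using ab by (simp add: set_integral_const emeasure_lborel_Icc_eq measure_def)
  have "(LINT x:{a..b}|lborel. f x)^2 \<le> (LINT x:{a..b}|lborel. (f x)^2) * (b - a)"
  proof (rule discr)
    fix l :: real
    have "0 \<le> (LINT x:{a..b}|lborel. (f x - l)^2)" by (rule setint_nonneg) simp
    also have "(LINT x:{a..b}|lborel. (f x - l)^2)
       = (LINT x:{a..b}|lborel. ((f x)^2 - 2*l*f x) + l^2 * 1)"
      by (rule set_lebesgue_integral_cong) (auto simp: power2_eq_square algebra_simps)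
    also have "\<dots> = (LINT x:{a..b}|lborel. (f x)^2) - 2*l*(LINT x:{a..b}|lborel. f x) + l^2*(b-a)"
      using nice_set_integrable[OF nf2] nice_set_integrable[OF f] ic m by simp
    finally show "0 \<le> (LINT x:{a..b}|lborel. (f x)^2) - 2*l*(LINT x:{a..b}|lborel. f x) + l^2*(b-a)" .
  qed (use ab in simp)
  then show ?thesis by (simp add: mult.commute)
qed

lemma split_int:
  fixes f :: "real \<Rightarrow> real"
  assumes i: "set_integrable lborel {a..c} f" and "a \<le> b" "b \<le> c"
  shows "(LINT x:{a..c}|lborel. f x) = (LINT x:{a..b}|lborel. f x) + (LINT x:{b..c}|lborel. f x)"
proof -
  have e: "{a..c} = {a..b} \<union> {b..c}" using assms by auto
  show ?thesis unfolding e
  proof (rule set_integral_Un_AE)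
    show "AE x in lborel. \<not> (x \<in> {a..b} \<and> x \<in> {b..c})"
      using AE_lborel_singleton[of b] by eventually_elim auto
    show "set_integrable lborel {a..b} f" by (rule set_integrable_subset[OF i]) (use assms in auto)
    show "set_integrable lborel {b..c} f" by (rule set_integrable_subset[OF i]) (use assms in auto)
  qed auto
qed

lemma G_Icc: assumes "nice w" shows "G w x = (LINT z:{x..1}|lborel. w z)"
  unfolding G_def set_lebesgue_integral_def
  by (rule arg_cong[where f="\<lambda>h. integral\<^sup>L lborel h"], rule ext)
     (use niceD(2)[OF assms] in \<open>auto split: split_indicator\<close>)

lemma nice_split:
  assumes "nice w" "a \<le> b" "b \<le> c"
  shows "(LINT x:{a..c}|lborel. w x) = (LINT x:{a..b}|lborel. w x) + (LINT x:{b..c}|lborel. w x)"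
  by (rule split_int[OF nice_set_integrable[OF assms(1)]]) (use assms in auto)

lemma comb1:
  fixes D a b A1 A2 :: real
  assumes "D \<le> a*A1" "D \<le> b*A2" "a \<ge> 0" "b \<ge> 0" "A1 \<ge> 0" "A2 \<ge> 0" "a + b = 1/2"
  shows "D \<le> 2*a*b*(A1+A2)"
proof -
  have "b*D \<le> b*(a*A1)" using assms by (intro mult_left_mono) auto
  moreover have "a*D \<le> a*(b*A2)" using assms by (intro mult_left_mono) auto
  ultimately have "(a+b)*D \<le> a*b*(A1+A2)" by (simp add: algebra_simps)
  then show ?thesis using assms(7) by simp
qed

lemma comb2:
  fixes u1 u2 l1 l2 B1 B2 :: real
  assumes "u1^2 \<le> l1*B1" "u2^2 \<le> l2*B2" "l1 \<ge> 0" "l2 \<ge> 0" "B1 \<ge> 0" "B2 \<ge> 0"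
  shows "(u1+u2)^2 \<le> (l1+l2)*(B1+B2)"
proof -
  have "(2*u1*u2)^2 = 4*(u1^2*u2^2)" by (simp add: power2_eq_square algebra_simps)
  also have "\<dots> \<le> 4*((l1*B1)*(l2*B2))"
    using assms by (intro mult_left_mono mult_mono) auto
  also have "\<dots> \<le> (l1*B2 + l2*B1)^2"
  proof -
    have "(l1*B2 + l2*B1)^2 - 4*((l1*B1)*(l2*B2)) = (l1*B2 - l2*B1)^2" by algebra
    then show ?thesis by (smt (verit) zero_le_power2)
  qed
  finally have "(2*u1*u2)^2 \<le> (l1*B2 + l2*B1)^2" .
  then have "2*u1*u2 \<le> l1*B2 + l2*B1"
    by (rule power2_le_imp_le) (use assms in simp)
  then have "(u1+u2)^2 \<le> l1*B1 + l2*B2 + (l1*B2 + l2*B1)"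
    using assms(1,2) by (simp add: power2_eq_square algebra_simps)
  also have "\<dots> = (l1+l2)*(B1+B2)" by (simp add: algebra_simps)
  finally show ?thesis .
qed

lemma polyint:
  fixes a b p q c :: real
  assumes "a \<le> b"
  shows "(LINT x:{a..b}|lborel. c*((x-p)*(q-x)))
    = c*((-(b^3)/3 + (p+q)*b^2/2 - p*q*b) - (-(a^3)/3 + (p+q)*a^2/2 - p*q*a))"
proof -
  let ?F = "\<lambda>x::real. c*(-(x^3)/3 + (p+q)*x^2/2 - p*q*x)"
  have "integral\<^sup>L lborel (\<lambda>x. indicator {a .. b} x *\<^sub>R (c*((x-p)*(q-x)))) = ?F b - ?F a"
  proof (rule integral_FTC_atLeastAtMost[OF assms])
    fix x :: real
    have "(?F has_real_derivative c*((x-p)*(q-x))) (at x within {a..b})"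
      apply (auto intro!: derivative_eq_intros)
      apply (simp add: power2_eq_square)
      apply algebra
      done
    then show "(?F has_vector_derivative c*((x-p)*(q-x))) (at x within {a..b})"
      by (simp add: has_real_derivative_iff_has_vector_derivative)
  next
    show "continuous_on {a..b} (\<lambda>x. c*((x-p)*(q-x)))" by (intro continuous_intros)
  qed
  then show ?thesis unfolding set_lebesgue_integral_def by (simp only: right_diff_distrib)
qed

lemma W_nice: "nice w \<Longrightarrow> nice (\<lambda>x. (w x)^2)"
  using nice_mult[of w w] by (simp add: power2_eq_square)

lemma IS_nonneg: "0 \<le> (LINT x:{a..b}|lborel. ((w::real\<Rightarrow>real) x)^2)"
  by (rule setint_nonneg) simp

lemma G_one: assumes "nice w" shows "G w 1 = 0"
proof -
  obtain C where C: "C \<ge> 0" "\<And>x. \<bar>w x\<bar> \<le> C" using nice_bound[OF assms] by blast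
  have "\<bar>G w 1\<bar> \<le> C * measure lborel {1..1::real}"
    unfolding G_Icc[OF assms] by (rule int_bound[OF assms C(2)]) auto
  then show ?thesis by simp
qed

lemma G_split: assumes "nice w" "a \<le> b" "b \<le> 1"
  shows "G w a = (LINT x:{a..b}|lborel. w x) + G w b"
  unfolding G_Icc[OF assms(1)] by (rule nice_split) (use assms in auto)

lemma z0_bound:
  assumes w: "nice w" and Iw: "I w = 0"
  shows "\<exists>k. (LINT x:{0..1}|lborel. (G w x - k)^2) \<le> (1/24) * (LINT x:{0..1}|lborel. (w x)^2)"
proof -
  let ?H = "G w"
  define IS where "IS = (\<lambda>a b (h::real\<Rightarrow>real). (LINT x:{a..b}|lborel. h x))"
  define W where "W = (\<lambda>x. (w x)^2)"
  have Wn: "nice W" unfolding W_def by (rule W_nice[OF w])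
  have Wp: "0 \<le> IS a b W" for a b unfolding IS_def W_def by (rule IS_nonneg)
  have H0: "?H 0 = 0" using Iw unfolding I_def G_Icc[OF w] .
  have H1: "?H 1 = 0" by (rule G_one[OF w])
  have Hs: "?H a = IS a b w + ?H b" if "a \<le> b" "b \<le> 1" for a b
    unfolding IS_def by (rule G_split[OF w that])
  have HI: "?H a = IS a 1 w" for a unfolding IS_def by (rule G_Icc[OF w])
  have spl: "IS a c h = IS a b h + IS b c h" if "nice h" "a \<le> b" "b \<le> c" for a b c h
    unfolding IS_def by (rule nice_split[OF that])
  have cs: "(IS a b w)^2 \<le> (b - a) * IS a b W" if "a \<le> b" for a b
    unfolding IS_def W_def by (rule CS_interval[OF w that])
  have contH: "continuous_on S ?H" for S using G_cont[OF w] continuous_on_subset by blast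
  have "\<exists>z. 0 \<le> z \<and> z \<le> 1/2 \<and> (\<lambda>z. ?H (z + 1/2) - ?H z) z = 0"
  proof -
    have c: "continuous_on {0..1/2} (\<lambda>z. ?H (z + 1/2) - ?H z)"
      by (intro continuous_intros continuous_on_compose2[OF G_cont[OF w]]) auto
    show ?thesis
    proof (cases "?H (1/2) \<ge> 0")
      case True
      show ?thesis by (rule IVT2'[OF _ _ _ c]) (use True H0 H1 in auto)
    next
      case False
      show ?thesis by (rule IVT'[OF _ _ _ c]) (use False H0 H1 in auto)
    qed
  qed
  then obtain z0 where z0: "0 \<le> z0" "z0 \<le> 1/2" "?H (z0 + 1/2) = ?H z0" by auto
  define z1 where "z1 = z0 + 1/2"
  have z1: "z0 \<le> z1" "z1 \<le> 1" "?H z1 = ?H z0" "z1 = z0 + 1/2" using z0 unfolding z1_def by auto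
  define k where "k = ?H z0"
  define J1 where "J1 = IS z0 z1 W"
  define J2 where "J2 = IS 0 z0 W + IS z1 1 W"
  have J1p: "J1 \<ge> 0" unfolding J1_def by (rule Wp)
  have J2p: "J2 \<ge> 0" unfolding J2_def using Wp by (simp add: add_nonneg_nonneg)
  have Jtot: "IS 0 1 W = J1 + J2"
    unfolding J1_def J2_def using spl[OF Wn, of 0 z0 1] spl[OF Wn, of z0 z1 1] z0 z1 by simp
  have PM: "(?H x - k)^2 \<le> 2*(x-z0)*(z1-x)*J1" if x: "z0 \<le> x" "x \<le> z1" for x
  proof -
    have e1: "?H x - k = - IS z0 x w" using Hs[of z0 x] x z1 unfolding k_def by simp
    have e2: "?H x - k = IS x z1 w" using Hs[of x z1] x z1 unfolding k_def by simp
    have d1: "(?H x - k)^2 \<le> (x - z0) * IS z0 x W" unfolding e1 using cs[of z0 x] x by simp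
    have d2: "(?H x - k)^2 \<le> (z1 - x) * IS x z1 W" unfolding e2 using cs[of x z1] x by simp
    have "(?H x - k)^2 \<le> 2*(x-z0)*(z1-x)*(IS z0 x W + IS x z1 W)"
      by (rule comb1[OF d1 d2]) (use x z1 Wp in auto)
    also have "IS z0 x W + IS x z1 W = J1" unfolding J1_def using spl[OF Wn, of z0 x z1] x by simp
    finally show ?thesis .
  qed
  have PR: "(?H x - k)^2 \<le> 2*(x-z1)*(1-x+z0)*J2" if x: "z1 \<le> x" "x \<le> 1" for x
  proof -
    have e1: "?H x - k = - IS z1 x w" using Hs[of z1 x] x z1 unfolding k_def by simp
    have e0: "0 = IS 0 z0 w + ?H z0" using Hs[of 0 z0] H0 z0 z1 by simp
    have e2: "?H x - k = IS x 1 w + IS 0 z0 w" using e0 HI[of x] unfolding k_def by simp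
    have d1: "(?H x - k)^2 \<le> (x - z1) * IS z1 x W" unfolding e1 using cs[of z1 x] x by simp
    have d2: "(?H x - k)^2 \<le> ((1 - x) + (z0 - 0)) * (IS x 1 W + IS 0 z0 W)"
      unfolding e2 by (rule comb2) (use cs[of x 1] cs[of 0 z0] x z0 Wp in auto)
    have "(?H x - k)^2 \<le> 2*(x-z1)*(1-x+z0)*(IS z1 x W + (IS x 1 W + IS 0 z0 W))"
      by (rule comb1[OF d1]) (use d2 x z0 z1 Wp in \<open>auto simp: add_nonneg_nonneg\<close>)
    also have "IS z1 x W + (IS x 1 W + IS 0 z0 W) = J2" unfolding J2_def using spl[OF Wn, of z1 x 1] x by simp
    finally show ?thesis .
  qed
  have PL: "(?H x - k)^2 \<le> 2*(z0-x)*(x+1-z1)*J2" if x: "0 \<le> x" "x \<le> z0" for x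
  proof -
    have e1: "?H x - k = IS x z0 w" using Hs[of x z0] x z1 unfolding k_def by simp
    have e0: "0 = IS 0 x w + ?H x" using Hs[of 0 x] H0 x z1 by simp
    have e2: "?H x - k = - (IS 0 x w + IS z1 1 w)" using e0 HI[of z1] z1(3) unfolding k_def by simp
    have d1: "(?H x - k)^2 \<le> (z0 - x) * IS x z0 W" unfolding e1 using cs[of x z0] x by simp
    have d2: "(?H x - k)^2 \<le> ((x - 0) + (1 - z1)) * (IS 0 x W + IS z1 1 W)"
      unfolding e2 power2_minus by (rule comb2) (use cs[of 0 x] cs[of z1 1] x z1 Wp in auto)
    have ee: "(x - 0) + (1 - z1) = x+1-z1" by simp
    have "(?H x - k)^2 \<le> 2*(z0-x)*(x+1-z1)*(IS x z0 W + (IS 0 x W + IS z1 1 W))"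
      by (rule comb1[OF d1 d2[unfolded ee]]) (use x z0 z1 Wp in \<open>auto simp: add_nonneg_nonneg\<close>)
    also have "IS x z0 W + (IS 0 x W + IS z1 1 W) = J2" unfolding J2_def using spl[OF Wn, of 0 x z0] x by simp
    finally show ?thesis .
  qed
  define D where "D = (\<lambda>x. (?H x - k)^2)"
  have Dc: "continuous_on UNIV D" unfolding D_def by (intro continuous_intros G_cont[OF w])
  have Di: "set_integrable lborel {a..b} D" for a b
    by (rule borel_integrable_atLeastAtMost') (rule continuous_on_subset[OF Dc], auto)
  have pi: "set_integrable lborel {a..b} (\<lambda>x. c*((x-p)*(q-x)))" for a b c p q :: real
    by (rule borel_integrable_atLeastAtMost') (intro continuous_intros)
  have "IS 0 1 D = IS 0 z0 D + IS z0 z1 D + IS z1 1 D"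
    unfolding IS_def using split_int[OF Di, of 0 z0 1] split_int[OF Di, of z0 z1 1] z0 z1 by simp
  also have "IS z0 z1 D \<le> IS z0 z1 (\<lambda>x. (2*J1)*((x-z0)*(z1-x)))"
    unfolding IS_def by (rule set_integral_mono[OF Di pi]) (use PM in \<open>auto simp: D_def algebra_simps\<close>)
  also have "IS z1 1 D \<le> IS z1 1 (\<lambda>x. (2*J2)*((x-z1)*((1+z0)-x)))"
    unfolding IS_def by (rule set_integral_mono[OF Di pi]) (use PR in \<open>auto simp: D_def algebra_simps\<close>)
  also have "IS 0 z0 D \<le> IS 0 z0 (\<lambda>x. (2*J2)*((x-(z1-1))*(z0-x)))"
    unfolding IS_def by (rule set_integral_mono[OF Di pi]) (use PL in \<open>auto simp: D_def algebra_simps\<close>)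
  finally have "IS 0 1 D \<le> IS 0 z0 (\<lambda>x. (2*J2)*((x-(z1-1))*(z0-x))) + IS z0 z1 (\<lambda>x. (2*J1)*((x-z0)*(z1-x)))
       + IS z1 1 (\<lambda>x. (2*J2)*((x-z1)*((1+z0)-x)))" by simp
  also have "\<dots> = (1/24) * (J1 + J2)"
  proof -
    have q1: "IS 0 z0 (\<lambda>x. (2*J2)*((x-(z1-1))*(z0-x))) = (2*J2)*((-(z0^3)/3 + ((z1-1)+z0)*z0^2/2 - (z1-1)*z0*z0) - (-(0^3)/3 + ((z1-1)+z0)*0^2/2 - (z1-1)*z0*0))"
      unfolding IS_def by (rule polyint[OF z0(1)])
    have q2: "IS z0 z1 (\<lambda>x. (2*J1)*((x-z0)*(z1-x))) = (2*J1)*((-(z1^3)/3 + (z0+z1)*z1^2/2 - z0*z1*z1) - (-(z0^3)/3 + (z0+z1)*z0^2/2 - z0*z1*z0))"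
      unfolding IS_def by (rule polyint[OF z1(1)])
    have q3: "IS z1 1 (\<lambda>x. (2*J2)*((x-z1)*((1+z0)-x))) = (2*J2)*((-(1^3)/3 + (z1+(1+z0))*1^2/2 - z1*(1+z0)*1) - (-(z1^3)/3 + (z1+(1+z0))*z1^2/2 - z1*(1+z0)*z1))"
      unfolding IS_def by (rule polyint[OF z1(2)])
    show ?thesis
      apply (unfold q1 q2 q3)
      apply (unfold z1(4))
      apply (simp add: field_simps)
      apply algebra
      done
  qed
  finally have "IS 0 1 D \<le> (1/24) * IS 0 1 W" using Jtot by simp
  then show ?thesis unfolding IS_def D_def W_def by blast
qed




lemma phi_bound: assumes "0 \<le> y" "y \<le> 1" shows "\<bar>phi y\<bar> \<le> 1"
proof (cases "y = 0")
  case True then show ?thesis by (simp add: phi_def)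
next
  case False
  then have y: "y > 0" using assms by simp
  have l1: "ln y \<le> 0" using assms y by simp
  have "ln (1/y) \<le> 1/y - 1" using y by (intro ln_le_minus_one) simp
  then have "- ln y \<le> 1/y - 1" using y by (simp add: ln_div)
  then have "y * (- ln y) \<le> y * (1/y - 1)" using y by (intro mult_left_mono) auto
  also have "\<dots> = 1 - y" using y by (simp add: field_simps)
  finally have "- (y * ln y) \<le> 1" using y by simp
  moreover have "y * ln y \<le> 0" using y l1 by (simp add: mult_nonneg_nonpos)
  ultimately show ?thesis unfolding phi_def by simp
qed

lemma nice_phi:
  assumes f: "nice f" and r: "\<And>x. 0 \<le> f x \<and> f x \<le> 1"
  shows "nice (\<lambda>x. phi (f x))"
proof -
  have [measurable]: "f \<in> borel_measurable borel" using niceD(1)[OF f] .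
  have "(\<lambda>x. phi (f x)) \<in> borel_measurable borel" unfolding phi_def by measurable
  moreover have "\<forall>x. x \<notin> {0..1} \<longrightarrow> phi (f x) = 0" using niceD(2)[OF f] by (simp add: phi_def)
  moreover have "\<forall>x. \<bar>phi (f x)\<bar> \<le> 1" using r phi_bound by blast
  ultimately show ?thesis unfolding nice_def by blast
qed

lemma nice_lin: "nice f \<Longrightarrow> nice g \<Longrightarrow> nice (\<lambda>x. a * f x + b * g x)"
  using nice_add nice_cmult by blast

lemma G_lin:
  assumes f: "nice f" and g: "nice g"
  shows "G (\<lambda>x. a * f x + b * g x) y = a * G f y + b * G g y"
  unfolding G_def using nice_set_integrable[OF f, of "{y..}"] nice_set_integrable[OF g, of "{y..}"] by simp

lemma J_lin_r:
  assumes f: "nice f" and g1: "nice g1" and g2: "nice g2"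
  shows "J f (\<lambda>x. a * g1 x + b * g2 x) = a * J f g1 + b * J f g2"
proof -
  have "J f (\<lambda>x. a * g1 x + b * g2 x) = (LINT x:{0..1}|lborel. a * (f x * G g1 x) + b * (f x * G g2 x))"
    unfolding J_def G_lin[OF g1 g2] by (simp add: algebra_simps)
  also have "\<dots> = a * J f g1 + b * J f g2"
    unfolding J_def using nice_set_integrable[OF nice_GG[OF f g1], of "{0..1}"]
      nice_set_integrable[OF nice_GG[OF f g2], of "{0..1}"] by simp
  finally show ?thesis .
qed

lemma J_lin_l:
  assumes f1: "nice f1" and f2: "nice f2" and g: "nice g"
  shows "J (\<lambda>x. a * f1 x + b * f2 x) g = a * J f1 g + b * J f2 g"
proof -
  have "J (\<lambda>x. a * f1 x + b * f2 x) g = (LINT x:{0..1}|lborel. a * (f1 x * G g x) + b * (f2 x * G g x))"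
    unfolding J_def by (simp add: algebra_simps)
  also have "\<dots> = a * J f1 g + b * J f2 g"
    unfolding J_def using nice_set_integrable[OF nice_GG[OF f1 g], of "{0..1}"]
      nice_set_integrable[OF nice_GG[OF f2 g], of "{0..1}"] by simp
  finally show ?thesis .
qed

lemma J_defect:
  assumes f1: "nice f1" and f2: "nice f2" and h1: "nice h1" and h2: "nice h2"
  shows "t * J f1 h1 + (1-t) * J f2 h2 - J (\<lambda>x. t * f1 x + (1-t) * f2 x) (\<lambda>x. t * h1 x + (1-t) * h2 x)
       = t*(1-t) * J (\<lambda>x. 1 * f1 x + (-1) * f2 x) (\<lambda>x. 1 * h1 x + (-1) * h2 x)"
proof -
  have a: "J (\<lambda>x. t * f1 x + (1-t) * f2 x) (\<lambda>x. t * h1 x + (1-t) * h2 x)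
     = t * (t * J f1 h1 + (1-t) * J f1 h2) + (1-t) * (t * J f2 h1 + (1-t) * J f2 h2)"
    unfolding J_lin_l[OF f1 f2 nice_lin[OF h1 h2]] J_lin_r[OF f1 h1 h2] J_lin_r[OF f2 h1 h2] ..
  have b: "J (\<lambda>x. 1 * f1 x + (-1) * f2 x) (\<lambda>x. 1 * h1 x + (-1) * h2 x)
     = 1 * (1 * J f1 h1 + (-1) * J f1 h2) + (-1) * (1 * J f2 h1 + (-1) * J f2 h2)"
    unfolding J_lin_l[OF f1 f2 nice_lin[OF h1 h2]] J_lin_r[OF f1 h1 h2] J_lin_r[OF f2 h1 h2] ..
  show ?thesis unfolding a b by (simp add: algebra_simps)
qed

lemma FE_nice:
  assumes f: "nice f" and g: "nice g" and h: "nice h"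
  shows "free_energy \<beta> f g h = \<beta> * (J f h + J g f + J h g)
     + (LINT x:{0..1}|lborel. phi (f x) + phi (g x) + phi (h x))"
proof -
  have inner: "(LINT z:{x..1}|lborel. f x * h z + g x * f z + h x * g z) = f x * G h x + g x * G f x + h x * G g x" for x
  proof -
    note si = nice_set_integrable[OF _ , of _ "{x..1}"]
    have "(LINT z:{x..1}|lborel. f x * h z + g x * f z + h x * g z)
        = (LINT z:{x..1}|lborel. f x * h z) + (LINT z:{x..1}|lborel. g x * f z) + (LINT z:{x..1}|lborel. h x * g z)"
      using si[OF h] si[OF f] si[OF g] by simp
    then show ?thesis unfolding G_Icc[OF f] G_Icc[OF g] G_Icc[OF h] by simp
  qed
  have outer: "(LINT x:{0..1}|lborel. f x * G h x + g x * G f x + h x * G g x) = J f h + J g f + J h g"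
    unfolding J_def
    using nice_set_integrable[OF nice_GG[OF f h], of "{0..1}"] nice_set_integrable[OF nice_GG[OF g f], of "{0..1}"]
      nice_set_integrable[OF nice_GG[OF h g], of "{0..1}"] by simp
  show ?thesis unfolding free_energy_def inner outer phi_def ..
qed

lemma FE_cong:
  assumes "\<And>x. x \<in> {0..1} \<Longrightarrow> f x = f' x" "\<And>x. x \<in> {0..1} \<Longrightarrow> g x = g' x" "\<And>x. x \<in> {0..1} \<Longrightarrow> h x = h' x"
  shows "free_energy \<beta> f g h = free_energy \<beta> f' g' h'"
proof -
  have "(LINT z:{x..1}|lborel. f x * h z + g x * f z + h x * g z) = (LINT z:{x..1}|lborel. f' x * h' z + g' x * f' z + h' x * g' z)"
    if "x \<in> {0..1}" for x
    by (rule set_lebesgue_integral_cong) (use assms that in auto)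
  then have e1: "(LINT x:{0..1}|lborel. (LINT z:{x..1}|lborel. f x * h z + g x * f z + h x * g z))
      = (LINT x:{0..1}|lborel. (LINT z:{x..1}|lborel. f' x * h' z + g' x * f' z + h' x * g' z))"
    by (intro set_lebesgue_integral_cong) auto
  have e2: "(LINT x:{0..1}|lborel. f x * ln (f x) + g x * ln (g x) + h x * ln (h x))
     = (LINT x:{0..1}|lborel. f' x * ln (f' x) + g' x * ln (g' x) + h' x * ln (h' x))"
    by (rule set_lebesgue_integral_cong) (use assms in auto)
  show ?thesis unfolding free_energy_def e1 e2 ..
qed

lemma sq0_AE:
  assumes f: "nice f" and z: "(LINT x:{0..1}|lborel. (f x)^2) = 0"
  shows "AE x in lborel. x \<in> {0..1} \<longrightarrow> f x = 0"
proof -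
  have i: "integrable lborel (\<lambda>x. indicator {0..1} x * (f x)^2)"
    using nice_set_integrable[OF W_nice[OF f], of "{0..1}"] unfolding set_integrable_def by simp
  have "integral\<^sup>L lborel (\<lambda>x. indicator {0..1} x * (f x)^2) = 0"
    using z unfolding set_lebesgue_integral_def by simp
  then have "AE x in lborel. indicator {0..1} x * (f x)^2 = 0"
    using integral_nonneg_eq_0_iff_AE[OF i] by simp
  then show ?thesis by eventually_elim (auto split: split_indicator)
qed

lemma J_bound:
  assumes u: "nice u" and w: "nice w" and Iu: "I u = 0" and Iw: "I w = 0"
  shows "(J u w)^2 \<le> (LINT x:{0..1}|lborel. (u x)^2) * ((1/24) * (LINT x:{0..1}|lborel. (w x)^2))"
proof -
  obtain k where k: "(LINT x:{0..1}|lborel. (G w x - k)^2) \<le> (1/24) * (LINT x:{0..1}|lborel. (w x)^2)"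
    using z0_bound[OF w Iw] by blast
  define g where "g = (\<lambda>x. indicator {0..1} x * (G w x - k))"
  obtain C where C: "C \<ge> 0" "\<And>x. \<bar>w x\<bar> \<le> C" using nice_bound[OF w] by blast
  have gn: "nice g"
  proof -
    have "g \<in> borel_measurable borel" unfolding g_def using G_meas[OF w] by measurable
    moreover have "\<bar>g x\<bar> \<le> C + \<bar>k\<bar>" for x
      using G_bound[OF w C(2), of x] C(1) unfolding g_def by (auto split: split_indicator)
    ultimately show ?thesis unfolding nice_def g_def by auto
  qed
  have "J u w = (LINT x:{0..1}|lborel. u x * g x + k * u x)"
    unfolding J_def by (rule set_lebesgue_integral_cong) (auto simp: g_def algebra_simps)
  also have "\<dots> = (LINT x:{0..1}|lborel. u x * g x) + k * I u"
    unfolding I_def using nice_set_integrable[OF nice_mult[OF u gn], of "{0..1}"]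
      nice_set_integrable[OF u, of "{0..1}"] by simp
  finally have Jg: "J u w = (LINT x:{0..1}|lborel. u x * g x)" using Iu by simp
  have g2: "(LINT x:{0..1}|lborel. (g x)^2) = (LINT x:{0..1}|lborel. (G w x - k)^2)"
    by (rule set_lebesgue_integral_cong) (auto simp: g_def)
  have "(J u w)^2 \<le> (LINT x:{0..1}|lborel. (u x)^2) * (LINT x:{0..1}|lborel. (g x)^2)"
    unfolding Jg by (rule CS_nice[OF u gn]) simp
  also have "\<dots> \<le> (LINT x:{0..1}|lborel. (u x)^2) * ((1/24) * (LINT x:{0..1}|lborel. (w x)^2))"
    unfolding g2 by (rule mult_left_mono[OF k IS_nonneg])
  finally show ?thesis .
qed

lemma arith_final:
  fixes \<beta> X Y Jv :: real
  assumes "0 < \<beta>" "\<beta> < 16/3" "X \<ge> 0" "Y \<ge> 0" "X + Y > 0" "Jv^2 \<le> X * ((1/24) * Y)"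
  shows "3*\<beta>*Jv < 3/2*X + 2*Y"
proof (cases "Jv \<le> 0")
  case True
  then have "3*\<beta>*Jv \<le> 0" using assms(1) by (simp add: mult_nonneg_nonpos)
  then show ?thesis using assms(3-5) by linarith
next
  case False
  then have Jp: "Jv > 0" by simp
  then have XY: "X*Y > 0" using assms(3,4,6)
    by (smt (verit, best) mult_eq_0_iff mult_nonneg_nonneg zero_less_power)
  have b2: "\<beta>^2 < 256/9"
  proof -
    have "\<beta>^2 < (16/3)^2" using assms(1,2) by (intro power_strict_mono) auto
    then show ?thesis by (simp add: power2_eq_square)
  qed
  have "(3*\<beta>*Jv)^2 = 9*\<beta>^2*Jv^2" by (simp add: power2_eq_square)
  also have "\<dots> \<le> 9*\<beta>^2*(X*((1/24)*Y))" using assms(6) by (intro mult_left_mono) auto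
  also have "\<dots> = (3/8)*\<beta>^2*(X*Y)" by simp
  also have "\<dots> < (3/8)*(256/9)*(X*Y)" using b2 XY by (intro mult_strict_right_mono) auto
  also have "\<dots> \<le> (3/2*X + 2*Y)^2"
  proof -
    have "(3/2*X + 2*Y)^2 - 12*(X*Y) = (3/2*X - 2*Y)^2" by algebra
    moreover have "(3/8)*(256/9)*(X*Y) \<le> 12*(X*Y)" using XY by simp
    ultimately show ?thesis by (smt (verit) zero_le_power2)
  qed
  finally show ?thesis
    by (rule power2_less_imp_less) (use assms(3,4) in simp)
qed

lemma hat_nice:
  assumes "set_borel_measurable lborel {0..1} f" "\<And>x. x \<in> {0..1} \<Longrightarrow> 0 \<le> f x \<and> f x \<le> 1"
  shows "nice (\<lambda>x. indicator {0..1} x * f x)"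
proof -
  have "(\<lambda>x. indicator {0..1} x * f x) \<in> borel_measurable borel"
    using assms(1) unfolding set_borel_measurable_def by simp
  moreover have "\<bar>indicator {0..1} x * f x\<bar> \<le> 1" for x
    using assms(2)[of x] by (auto split: split_indicator)
  ultimately show ?thesis unfolding nice_def by auto
qed

lemma hat_I: "I (\<lambda>x. indicator {0..1} x * f x) = (LINT x:{0..1}|lborel. f x)"
  unfolding I_def by (rule set_lebesgue_integral_cong) auto

lemma I_lin: "nice f \<Longrightarrow> nice g \<Longrightarrow> I (\<lambda>x. a * f x + b * g x) = a * I f + b * I g"
  unfolding I_def using nice_set_integrable[of f "{0..1}"] nice_set_integrable[of g "{0..1}"] by simp



theorem mainTheorem6:
  fixes \<beta> rA rB rC t :: real and nA nB nC mA mB mC :: "real \<Rightarrow> real"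
  assumes "0 < \<beta>" and "\<beta> < 4 * pi / 3"
    and "rA > 0" and "rB > 0" and "rC > 0" and "rA + rB + rC = 1"
    and "admissible rA rB rC nA nB nC"
    and "admissible rA rB rC mA mB mC"
    and "\<not> (AE x in lborel. x \<in> {0..1} \<longrightarrow> nA x = mA x \<and> nB x = mB x \<and> nC x = mC x)"
    and "0 < t" and "t < 1"
  shows "free_energy \<beta> (\<lambda>x. t * nA x + (1 - t) * mA x)
                       (\<lambda>x. t * nB x + (1 - t) * mB x)
                       (\<lambda>x. t * nC x + (1 - t) * mC x)
         < t * free_energy \<beta> nA nB nC + (1 - t) * free_energy \<beta> mA mB mC"
proof -
  note a1 = assms(7)[unfolded admissible_def]
  note a2 = assms(8)[unfolded admissible_def]
  have t: "0 < t" "t < 1" using assms(10,11) .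
  define NA where "NA = (\<lambda>x. indicator {0..1} x * nA x)"
  define NB where "NB = (\<lambda>x. indicator {0..1} x * nB x)"
  define NC where "NC = (\<lambda>x. indicator {0..1} x * nC x)"
  define MA where "MA = (\<lambda>x. indicator {0..1} x * mA x)"
  define MB where "MB = (\<lambda>x. indicator {0..1} x * mB x)"
  define MC where "MC = (\<lambda>x. indicator {0..1} x * mC x)"
  have rn: "0 \<le> nA x \<and> nA x \<le> 1" "0 \<le> nB x \<and> nB x \<le> 1" "0 \<le> nC x \<and> nC x \<le> 1"
    "nA x + nB x + nC x = 1" if "x \<in> {0..1}" for x using a1 that by fastforce+
  have rm: "0 \<le> mA x \<and> mA x \<le> 1" "0 \<le> mB x \<and> mB x \<le> 1" "0 \<le> mC x \<and> mC x \<le> 1"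
    "mA x + mB x + mC x = 1" if "x \<in> {0..1}" for x using a2 that by fastforce+
  have nN: "nice NA" "nice NB" "nice NC" "nice MA" "nice MB" "nice MC"
    unfolding NA_def NB_def NC_def MA_def MB_def MC_def
    using a1 a2 rn rm by (intro hat_nice; blast)+
  have rng: "0 \<le> NA x \<and> NA x \<le> 1" "0 \<le> NB x \<and> NB x \<le> 1" "0 \<le> NC x \<and> NC x \<le> 1"
     "0 \<le> MA x \<and> MA x \<le> 1" "0 \<le> MB x \<and> MB x \<le> 1" "0 \<le> MC x \<and> MC x \<le> 1" for x
    unfolding NA_def NB_def NC_def MA_def MB_def MC_def using rn rm
    by (auto split: split_indicator)
  have IN: "I NA = rA" "I NB = rB" "I NC = rC" "I MA = rA" "I MB = rB" "I MC = rC"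
    unfolding NA_def NB_def NC_def MA_def MB_def MC_def hat_I using a1 a2 by auto
  define XA where "XA = (\<lambda>x. t * NA x + (1-t) * MA x)"
  define XB where "XB = (\<lambda>x. t * NB x + (1-t) * MB x)"
  define XC where "XC = (\<lambda>x. t * NC x + (1-t) * MC x)"
  have nX: "nice XA" "nice XB" "nice XC" unfolding XA_def XB_def XC_def using nN nice_lin by auto
  define dA where "dA = (\<lambda>x. 1 * NA x + (-1) * MA x)"
  define dB where "dB = (\<lambda>x. 1 * NB x + (-1) * MB x)"
  define dC where "dC = (\<lambda>x. 1 * NC x + (-1) * MC x)"
  have nd: "nice dA" "nice dB" "nice dC" unfolding dA_def dB_def dC_def using nN nice_lin[of _ _ 1 "-1"] by blast+
  have LHS: "free_energy \<beta> (\<lambda>x. t * nA x + (1 - t) * mA x) (\<lambda>x. t * nB x + (1 - t) * mB x)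
      (\<lambda>x. t * nC x + (1 - t) * mC x) = free_energy \<beta> XA XB XC"
    by (rule FE_cong) (auto simp: XA_def XB_def XC_def NA_def NB_def NC_def MA_def MB_def MC_def)
  have RN: "free_energy \<beta> nA nB nC = free_energy \<beta> NA NB NC"
    by (rule FE_cong) (auto simp: NA_def NB_def NC_def)
  have RM: "free_energy \<beta> mA mB mC = free_energy \<beta> MA MB MC"
    by (rule FE_cong) (auto simp: MA_def MB_def MC_def)
  define EN where "EN = J NA NC + J NB NA + J NC NB"
  define EM where "EM = J MA MC + J MB MA + J MC MB"
  define EXX where "EXX = J XA XC + J XB XA + J XC XB"
  have Edef: "t * EN + (1-t) * EM - EXX = t*(1-t) * (J dA dC + J dB dA + J dC dB)"
    using J_defect[OF nN(1) nN(4) nN(3) nN(6), of t] J_defect[OF nN(2) nN(5) nN(1) nN(4), of t]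
      J_defect[OF nN(3) nN(6) nN(2) nN(5), of t]
    unfolding EN_def EM_def EXX_def XA_def XB_def XC_def dA_def dB_def dC_def
    by (simp add: algebra_simps)
  have dCe: "dC = (\<lambda>x. (-1) * dA x + (-1) * dB x)"
  proof
    fix x show "dC x = (-1) * dA x + (-1) * dB x"
    proof (cases "x \<in> {0..1}")
      case True then show ?thesis using rn(4)[OF True] rm(4)[OF True]
        unfolding dA_def dB_def dC_def NA_def NB_def NC_def MA_def MB_def MC_def by simp
    next
      case False then show ?thesis
        unfolding dA_def dB_def dC_def NA_def NB_def NC_def MA_def MB_def MC_def by simp
    qed
  qed
  have "I dA = 1 * I NA + (-1) * I MA" unfolding dA_def by (rule I_lin[OF nN(1) nN(4)])
  moreover have "I dB = 1 * I NB + (-1) * I MB" unfolding dB_def by (rule I_lin[OF nN(2) nN(5)])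
  ultimately have Id: "I dA = 0" "I dB = 0" using IN by simp_all
  have jAA: "J dA dA = 0" using ibp[OF nd(1) nd(1)] Id by simp
  have jBB: "J dB dB = 0" using ibp[OF nd(2) nd(2)] Id by simp
  have jAB: "J dB dA + J dA dB = 0" using ibp[OF nd(1) nd(2)] Id by simp
  have EDd: "J dA dC + J dB dA + J dC dB = -3 * J dA dB"
    unfolding dCe J_lin_r[OF nd(1) nd(1) nd(2)] J_lin_l[OF nd(1) nd(2) nd(2)]
    using jAA jBB jAB by simp
  define w where "w = (\<lambda>x. 1 * dB x + (1/2) * dA x)"
  have nw: "nice w" unfolding w_def by (rule nice_lin[OF nd(2) nd(1)])
  have "I w = 1 * I dB + (1/2) * I dA" unfolding w_def by (rule I_lin[OF nd(2) nd(1)])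
  then have Iw: "I w = 0" using Id by simp
  have "J dA w = 1 * J dA dB + (1/2) * J dA dA" unfolding w_def by (rule J_lin_r[OF nd(1) nd(2) nd(1)])
  then have Jw: "J dA w = J dA dB" using jAA by simp
  define X where "X = (LINT x:{0..1}|lborel. (dA x)^2)"
  define Y where "Y = (LINT x:{0..1}|lborel. (w x)^2)"
  have X0: "X \<ge> 0" "Y \<ge> 0" unfolding X_def Y_def by (rule IS_nonneg)+
  have JB: "(J dA dB)^2 \<le> X * ((1/24) * Y)"
    using J_bound[OF nd(1) nw Id(1) Iw] unfolding Jw X_def Y_def .
  define PN where "PN = (\<lambda>x. phi (NA x) + phi (NB x) + phi (NC x))"
  define PM where "PM = (\<lambda>x. phi (MA x) + phi (MB x) + phi (MC x))"
  define PX where "PX = (\<lambda>x. phi (XA x) + phi (XB x) + phi (XC x))"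
  have rX: "0 \<le> XA x \<and> XA x \<le> 1" "0 \<le> XB x \<and> XB x \<le> 1" "0 \<le> XC x \<and> XC x \<le> 1" for x
  proof -
    have c: "0 \<le> t*a + (1-t)*b \<and> t*a + (1-t)*b \<le> 1" if "0 \<le> a \<and> a \<le> 1" "0 \<le> b \<and> b \<le> 1" for a b :: real
    proof -
      have "t*a \<le> t*1" "(1-t)*b \<le> (1-t)*1" using that t by (intro mult_left_mono; simp)+
      moreover have "0 \<le> t*a" "0 \<le> (1-t)*b" using that t by simp_all
      ultimately show ?thesis by simp
    qed
    show "0 \<le> XA x \<and> XA x \<le> 1" unfolding XA_def by (rule c) (use rng in auto)
    show "0 \<le> XB x \<and> XB x \<le> 1" unfolding XB_def by (rule c) (use rng in auto)
    show "0 \<le> XC x \<and> XC x \<le> 1" unfolding XC_def by (rule c) (use rng in auto)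
  qed
  have nP: "nice PN" "nice PM" "nice PX" unfolding PN_def PM_def PX_def
    using nice_phi nN nX rng rX nice_add by meson+
  have Entdef: "t * (LINT x:{0..1}|lborel. PN x) + (1-t) * (LINT x:{0..1}|lborel. PM x) - (LINT x:{0..1}|lborel. PX x)
      = (LINT x:{0..1}|lborel. t * PN x + (1-t) * PM x - PX x)"
    using nice_set_integrable[OF nP(1), of "{0..1}"] nice_set_integrable[OF nP(2), of "{0..1}"]
      nice_set_integrable[OF nP(3), of "{0..1}"] by simp
  have nQ: "nice (\<lambda>x. t*(1-t)*((dA x)^2 + (dB x)^2 + (dC x)^2))"
    using nice_cmult nice_add W_nice nd by meson
  have nR: "nice (\<lambda>x. t * PN x + (1-t) * PM x - PX x)"
    using nice_lin nice_diff nP by meson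
  have Ebound: "(LINT x:{0..1}|lborel. t*(1-t)*((dA x)^2 + (dB x)^2 + (dC x)^2))
        \<le> (LINT x:{0..1}|lborel. t * PN x + (1-t) * PM x - PX x)"
  proof (rule set_integral_mono[OF nice_set_integrable[OF nQ] nice_set_integrable[OF nR]])
    fix x :: real assume x: "x \<in> {0..1}"
    have e: "NA x = nA x" "NB x = nB x" "NC x = nC x" "MA x = mA x" "MB x = mB x" "MC x = mC x"
      unfolding NA_def NB_def NC_def MA_def MB_def MC_def using x by auto
    show "t*(1-t)*((dA x)^2 + (dB x)^2 + (dC x)^2) \<le> t * PN x + (1-t) * PM x - PX x"
      using pointwise_defect[of "nA x" "nB x" "nC x" "mA x" "mB x" "mC x" t] rn[OF x] rm[OF x] t
      unfolding PN_def PM_def PX_def XA_def XB_def XC_def dA_def dB_def dC_def e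
      by (simp add: algebra_simps)
  qed (auto)
  have Qeq: "(LINT x:{0..1}|lborel. t*(1-t)*((dA x)^2 + (dB x)^2 + (dC x)^2)) = t*(1-t)*(3/2*X + 2*Y)"
  proof -
    have "(LINT x:{0..1}|lborel. t*(1-t)*((dA x)^2 + (dB x)^2 + (dC x)^2))
        = (LINT x:{0..1}|lborel. t*(1-t)*(3/2*(dA x)^2 + 2*(w x)^2))"
      by (rule set_lebesgue_integral_cong) (auto simp: dCe w_def power2_eq_square algebra_simps)
    also have "\<dots> = t*(1-t)*(3/2*X + 2*Y)"
      unfolding X_def Y_def using nice_set_integrable[OF W_nice[OF nd(1)], of "{0..1}"]
        nice_set_integrable[OF W_nice[OF nw], of "{0..1}"] by simp
    finally show ?thesis .
  qed
  have XY: "X + Y > 0"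
  proof (rule ccontr)
    assume "\<not> X + Y > 0"
    then have "X = 0" "Y = 0" using X0 by linarith+
    then have "AE x in lborel. x \<in> {0..1} \<longrightarrow> dA x = 0" "AE x in lborel. x \<in> {0..1} \<longrightarrow> w x = 0"
      using sq0_AE[OF nd(1)] sq0_AE[OF nw] unfolding X_def Y_def by auto
    then have "AE x in lborel. x \<in> {0..1} \<longrightarrow> nA x = mA x \<and> nB x = mB x \<and> nC x = mC x"
    proof eventually_elim
      case (elim x)
      show ?case
      proof
        assume x: "x \<in> {0..1}"
        have e: "NA x = nA x" "NB x = nB x" "NC x = nC x" "MA x = mA x" "MB x = mB x" "MC x = mC x"
          unfolding NA_def NB_def NC_def MA_def MB_def MC_def using x by auto
        have "dA x = 0" "w x = 0" using elim x by auto
        then have "dB x = 0" unfolding w_def by simp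
        moreover have "dC x = 0" using \<open>dA x = 0\<close> \<open>dB x = 0\<close> dCe by (simp add: fun_eq_iff)
        ultimately show "nA x = mA x \<and> nB x = mB x \<and> nC x = mC x"
          using \<open>dA x = 0\<close> unfolding dA_def dB_def dC_def e by simp
      qed
    qed
    then show False using assms(9) by simp
  qed
  have b: "\<beta> < 16/3" using assms(2) pi_less_4 by simp
  have fin: "3*\<beta>*J dA dB < 3/2*X + 2*Y" by (rule arith_final[OF assms(1) b X0 XY JB])
  have FN: "free_energy \<beta> NA NB NC = \<beta> * EN + (LINT x:{0..1}|lborel. PN x)"
    unfolding EN_def PN_def by (rule FE_nice[OF nN(1-3)])
  have FM: "free_energy \<beta> MA MB MC = \<beta> * EM + (LINT x:{0..1}|lborel. PM x)"
    unfolding EM_def PM_def by (rule FE_nice[OF nN(4-6)])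
  have FX: "free_energy \<beta> XA XB XC = \<beta> * EXX + (LINT x:{0..1}|lborel. PX x)"
    unfolding EXX_def PX_def by (rule FE_nice[OF nX])
  have "t * free_energy \<beta> NA NB NC + (1-t) * free_energy \<beta> MA MB MC - free_energy \<beta> XA XB XC
      = \<beta> * (t * EN + (1-t) * EM - EXX)
        + (t * (LINT x:{0..1}|lborel. PN x) + (1-t) * (LINT x:{0..1}|lborel. PM x) - (LINT x:{0..1}|lborel. PX x))"
    unfolding FN FM FX by (simp add: algebra_simps)
  also have "\<dots> \<ge> \<beta> * (t*(1-t) * (-3 * J dA dB)) + t*(1-t)*(3/2*X + 2*Y)"
    unfolding Edef EDd Entdef by (rule add_left_mono) (use Ebound in \<open>simp only: Qeq\<close>)
  finally have "t * free_energy \<beta> NA NB NC + (1-t) * free_energy \<beta> MA MB MC - free_energy \<beta> XA XB XC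
      \<ge> t*(1-t) * (3/2*X + 2*Y - 3*\<beta>*J dA dB)" by (simp add: algebra_simps)
  moreover have "t*(1-t) * (3/2*X + 2*Y - 3*\<beta>*J dA dB) > 0" using t fin by simp
  ultimately show ?thesis unfolding LHS RN RM by simp
qed


end
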